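(* Let $A\in\mathbb{R}^{m\times n}$ with $A'A$ invertible, $y\in\mathbb{R}^m$, $\gamma>0$, $\mu\ge0$. Then the optimal value $\zeta_{CR}$ of (CR) satisfies $$\zeta_{CR}=\max_{p\in\mathbb{R}^n}\ \|y\|_2^2-\Big(A'y-\tfrac{1}{2\gamma}p\Big)'(A'A)^{-1}\Big(A'y-\tfrac{1}{2\gamma}p\Big)+\sum_{i=1}^n\min\Big\{0,\ \mu-\tfrac{p_i^2}{4\gamma}\Big\}.$$
   Context: (CR) is the problem $\zeta_{CR}=\min_{x,z}\ \|y-Ax\|_2^2+\frac1\gamma\sum_{i=1}^n \frac{x_i^2}{z_i}+\mu\sum_{i=1}^n z_i$ subject to $x\in\mathbb{R}^n$, $z\in[0,1]^n$, where $x_i^2/z_i=0$ if $x_i=z_i=0$ and $x_i^2/z_i=+\infty$ if $z_i=0$, $x_i\ne0$. *)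

theory Defs
  imports "HOL-Analysis.Analysis" "HOL-Library.Extended_Real"
begin

definition persp :: "real \<Rightarrow> real \<Rightarrow> ereal" where
  "persp x z = (if z = 0 then (if x = 0 then 0 else \<infinity>) else ereal (x\<^sup>2 / z))"

definition CR_obj :: "real^'n^'m \<Rightarrow> real^'m \<Rightarrow> real \<Rightarrow> real \<Rightarrow> real^'n \<Rightarrow> real^'n \<Rightarrow> ereal" where
  "CR_obj A y \<gamma> \<mu> x z =
     ereal ((norm (y - A *v x))\<^sup>2)
     + ereal (1 / \<gamma>) * (\<Sum>i\<in>UNIV. persp (x $ i) (z $ i))
     + ereal (\<mu> * (\<Sum>i\<in>UNIV. z $ i))"

definition zeta_CR :: "real^'n^'m \<Rightarrow> real^'m \<Rightarrow> real \<Rightarrow> real \<Rightarrow> ereal" where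
  "zeta_CR A y \<gamma> \<mu> =
     (INF xz \<in> {(x, z). \<forall>i. 0 \<le> z $ i \<and> z $ i \<le> 1}. CR_obj A y \<gamma> \<mu> (fst xz) (snd xz))"

definition CR_dual :: "real^'n^'m \<Rightarrow> real^'m \<Rightarrow> real \<Rightarrow> real \<Rightarrow> real^'n \<Rightarrow> real" where
  "CR_dual A y \<gamma> \<mu> p =
     (let v = transpose A *v y - (1 / (2 * \<gamma>)) *\<^sub>R p in
      (norm y)\<^sup>2 - v \<bullet> (matrix_inv (transpose A ** A) *v v)
      + (\<Sum>i\<in>UNIV. min 0 (\<mu> - (p $ i)\<^sup>2 / (4 * \<gamma>))))"

end

theory Submission
  imports Defs
begin


lemma small_lim:
  fixes a K \<delta> :: real
  assumes "\<delta> > 0" "\<forall>t. 0 < t \<and> t < \<delta> \<longrightarrow> t * a \<le> K * t\<^sup>2"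
  shows "a \<le> 0"
proof (rule ccontr)
  assume "\<not> a \<le> 0" hence a: "a > 0" by simp
  define t where "t = min (\<delta>/2) (a / (2*(\<bar>K\<bar>+1)))"
  have t0: "t > 0" using a assms(1) by (simp add: t_def)
  have t1: "t < \<delta>" using assms(1) by (simp add: t_def)
  have t2: "t \<le> a / (2*(\<bar>K\<bar>+1))" by (simp add: t_def)
  have "t * a \<le> K * t\<^sup>2" using assms(2) t0 t1 by blast
  hence "a \<le> K * t" using t0 by (simp add: power2_eq_square mult.assoc)
  also have "\<dots> \<le> \<bar>K\<bar> * t" using t0 by (simp add: mult_right_mono)
  also have "\<dots> \<le> \<bar>K\<bar> * (a / (2*(\<bar>K\<bar>+1)))" using t2 by (intro mult_left_mono) auto
  also have "\<dots> < a" using a by (simp add: field_simps) (smt (verit) mult_nonneg_nonneg abs_ge_zero)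
  finally show False by simp
qed

lemma nb:
  fixes c e :: real
  assumes "e > 0"
  shows "\<exists>\<delta>>0. \<forall>t. \<bar>t\<bar> < \<delta> \<longrightarrow> \<bar>(c+t)\<^sup>2 - c\<^sup>2\<bar> < e"
proof -
  define \<delta> where "\<delta> = min 1 (e / (2*\<bar>c\<bar>+1))"
  have "\<delta> > 0" using assms by (simp add: \<delta>_def)
  moreover have "\<bar>(c+t)\<^sup>2 - c\<^sup>2\<bar> < e" if "\<bar>t\<bar> < \<delta>" for t
  proof -
    have "\<bar>(c+t)\<^sup>2 - c\<^sup>2\<bar> = \<bar>t\<bar> * \<bar>2*c + t\<bar>" by (simp add: power2_eq_square algebra_simps abs_mult[symmetric])
    also have "\<dots> \<le> \<bar>t\<bar> * (2*\<bar>c\<bar>+1)"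
      apply (rule mult_left_mono) using that by (auto simp: \<delta>_def)
    also have "\<dots> < \<delta> * (2*\<bar>c\<bar>+1)"
      using that by (intro mult_strict_right_mono) auto
    also have "\<dots> \<le> e / (2*\<bar>c\<bar>+1) * (2*\<bar>c\<bar>+1)"
      by (intro mult_right_mono) (auto simp: \<delta>_def)
    also have "\<dots> = e" by simp
    finally show ?thesis .
  qed
  ultimately show ?thesis by blast
qed

definition phi :: "real \<Rightarrow> real \<Rightarrow> real \<Rightarrow> real" where
  "phi \<gamma> \<mu> u = min 0 (\<mu> - u\<^sup>2 / (4 * \<gamma>))"

lemma phi0: "\<gamma> > 0 \<Longrightarrow> u\<^sup>2 \<le> 4*\<gamma>*\<mu> \<Longrightarrow> phi \<gamma> \<mu> u = 0"
  unfolding phi_def by (simp add: pos_divide_le_eq mult.commute)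
lemma phi1: "\<gamma> > 0 \<Longrightarrow> 4*\<gamma>*\<mu> \<le> u\<^sup>2 \<Longrightarrow> phi \<gamma> \<mu> u = \<mu> - u\<^sup>2 / (4 * \<gamma>)"
  unfolding phi_def by (simp add: pos_le_divide_eq mult.commute)

lemma coord:
  fixes \<gamma> \<mu> c w K :: real
  assumes g: "\<gamma> > 0" "\<mu> \<ge> 0"
    and H: "\<And>t. t*w/\<gamma> - K*t\<^sup>2 + phi \<gamma> \<mu> (c+t) - phi \<gamma> \<mu> c \<le> 0"
  shows "\<exists>z. 0 \<le> z \<and> z \<le> 1 \<and> (z = 0 \<longrightarrow> w = 0) \<and>
            (1/\<gamma>) * (if z = 0 then 0 else w\<^sup>2/z) + \<mu>*z - c*w/\<gamma> = phi \<gamma> \<mu> c"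
proof -
  have U0: "w \<le> 0" if "\<delta> > 0" "\<And>t. 0<t \<Longrightarrow> t<\<delta> \<Longrightarrow> phi \<gamma> \<mu> (c+t) = phi \<gamma> \<mu> c" for \<delta>
  proof -
    have "t * (w/\<gamma>) \<le> K * t\<^sup>2" if "0<t" "t<\<delta>" for t
      using H[of t] \<open>\<And>t. 0<t \<Longrightarrow> t<\<delta> \<Longrightarrow> _\<close>[OF that] by simp
    hence "w/\<gamma> \<le> 0" using small_lim[of \<delta> "w/\<gamma>" K] \<open>\<delta>>0\<close> by blast
    thus ?thesis using g by (simp add: divide_le_0_iff zero_le_divide_iff)
  qed
  have L0: "w \<ge> 0" if "\<delta> > 0" "\<And>t. 0<t \<Longrightarrow> t<\<delta> \<Longrightarrow> phi \<gamma> \<mu> (c-t) = phi \<gamma> \<mu> c" for \<delta>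
  proof -
    have "t * (-w/\<gamma>) \<le> K * t\<^sup>2" if "0<t" "t<\<delta>" for t
      using H[of "-t"] \<open>\<And>t. 0<t \<Longrightarrow> t<\<delta> \<Longrightarrow> _\<close>[OF that] by simp
    hence "-w/\<gamma> \<le> 0" using small_lim[of \<delta> "-w/\<gamma>" K] \<open>\<delta>>0\<close> by blast
    thus ?thesis using g by (simp add: divide_le_0_iff zero_le_divide_iff)
  qed
  have U1: "w \<le> c/2" if "\<delta> > 0" "\<And>t. 0<t \<Longrightarrow> t<\<delta> \<Longrightarrow> phi \<gamma> \<mu> (c+t) - phi \<gamma> \<mu> c = -((2*c*t+t\<^sup>2)/(4*\<gamma>))" for \<delta>
  proof -
    have "t * ((w - c/2)/\<gamma>) \<le> (K + 1/(4*\<gamma>)) * t\<^sup>2" if "0<t" "t<\<delta>" for t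
    proof -
      have "t*w/\<gamma> - K*t\<^sup>2 - (2*c*t+t\<^sup>2)/(4*\<gamma>) \<le> 0"
        using H[of t] \<open>\<And>t. 0<t \<Longrightarrow> t<\<delta> \<Longrightarrow> _\<close>[OF that] by linarith
      thus ?thesis using g by (simp add: field_simps power2_eq_square)
    qed
    hence "(w - c/2)/\<gamma> \<le> 0" using small_lim[of \<delta> "(w - c/2)/\<gamma>" "K + 1/(4*\<gamma>)"] \<open>\<delta>>0\<close> by blast
    thus ?thesis using g by (simp add: divide_le_0_iff zero_le_divide_iff)
  qed
  have L1: "w \<ge> c/2" if "\<delta> > 0" "\<And>t. 0<t \<Longrightarrow> t<\<delta> \<Longrightarrow> phi \<gamma> \<mu> (c-t) - phi \<gamma> \<mu> c = -((t\<^sup>2 - 2*c*t)/(4*\<gamma>))" for \<delta>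
  proof -
    have "t * ((c/2 - w)/\<gamma>) \<le> (K + 1/(4*\<gamma>)) * t\<^sup>2" if "0<t" "t<\<delta>" for t
    proof -
      have h: "-t*w/\<gamma> - K*t\<^sup>2 + phi \<gamma> \<mu> (c-t) - phi \<gamma> \<mu> c \<le> 0"
        using H[of "-t"] by simp
      have "-t*w/\<gamma> - K*t\<^sup>2 - (t\<^sup>2 - 2*c*t)/(4*\<gamma>) \<le> 0"
        using h \<open>\<And>t. 0<t \<Longrightarrow> t<\<delta> \<Longrightarrow> _\<close>[OF that] by linarith
      thus ?thesis using g by (simp add: field_simps power2_eq_square)
    qed
    hence "(c/2 - w)/\<gamma> \<le> 0" using small_lim[of \<delta> "(c/2 - w)/\<gamma>" "K + 1/(4*\<gamma>)"] \<open>\<delta>>0\<close> by blast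
    thus ?thesis using g by (simp add: divide_le_0_iff zero_le_divide_iff)
  qed
  have P1: "phi \<gamma> \<mu> (c+t) - phi \<gamma> \<mu> c = -((2*c*t+t\<^sup>2)/(4*\<gamma>))"
    if "4*\<gamma>*\<mu> \<le> c\<^sup>2" "4*\<gamma>*\<mu> \<le> (c+t)\<^sup>2" for t
    using phi1[OF g(1) that(1)] phi1[OF g(1) that(2)] g
    by (simp add: field_simps power2_eq_square)
  have P2: "phi \<gamma> \<mu> (c-t) - phi \<gamma> \<mu> c = -((t\<^sup>2 - 2*c*t)/(4*\<gamma>))"
    if "4*\<gamma>*\<mu> \<le> c\<^sup>2" "4*\<gamma>*\<mu> \<le> (c-t)\<^sup>2" for t
    using phi1[OF g(1) that(1)] phi1[OF g(1) that(2)] g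
    by (simp add: field_simps power2_eq_square)
  consider (A) "c\<^sup>2 < 4*\<gamma>*\<mu>" | (B) "c\<^sup>2 > 4*\<gamma>*\<mu>" | (C) "c\<^sup>2 = 4*\<gamma>*\<mu>" by linarith
  then show ?thesis
  proof cases
    case A
    obtain \<delta> where d: "\<delta> > 0" "\<And>t. \<bar>t\<bar> < \<delta> \<Longrightarrow> \<bar>(c+t)\<^sup>2 - c\<^sup>2\<bar> < 4*\<gamma>*\<mu> - c\<^sup>2"
      using nb[of "4*\<gamma>*\<mu> - c\<^sup>2" c] A by auto
    have pc: "phi \<gamma> \<mu> c = 0" using phi0[OF g(1)] A by simp
    have "w \<le> 0"
    proof (rule U0[OF d(1)])
      fix t :: real assume "0<t" "t<\<delta>"
      hence "(c+t)\<^sup>2 \<le> 4*\<gamma>*\<mu>" using d(2)[of t] by auto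
      thus "phi \<gamma> \<mu> (c+t) = phi \<gamma> \<mu> c" using phi0[OF g(1)] pc by simp
    qed
    moreover have "w \<ge> 0"
    proof (rule L0[OF d(1)])
      fix t :: real assume "0<t" "t<\<delta>"
      hence "(c+(-t))\<^sup>2 \<le> 4*\<gamma>*\<mu>" using d(2)[of "-t"] by auto
      thus "phi \<gamma> \<mu> (c-t) = phi \<gamma> \<mu> c" using phi0[OF g(1)] pc by simp
    qed
    ultimately have "w = 0" by simp
    thus ?thesis using pc by (intro exI[of _ 0]) simp
  next
    case B
    obtain \<delta> where d: "\<delta> > 0" "\<And>t. \<bar>t\<bar> < \<delta> \<Longrightarrow> \<bar>(c+t)\<^sup>2 - c\<^sup>2\<bar> < c\<^sup>2 - 4*\<gamma>*\<mu>"
      using nb[of "c\<^sup>2 - 4*\<gamma>*\<mu>" c] B by auto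
    have "w \<le> c/2"
    proof (rule U1[OF d(1)])
      fix t :: real assume "0<t" "t<\<delta>"
      hence "(c+t)\<^sup>2 \<ge> 4*\<gamma>*\<mu>" using d(2)[of t] by auto
      thus "phi \<gamma> \<mu> (c+t) - phi \<gamma> \<mu> c = -((2*c*t+t\<^sup>2)/(4*\<gamma>))" using P1 B by simp
    qed
    moreover have "w \<ge> c/2"
    proof (rule L1[OF d(1)])
      fix t :: real assume "0<t" "t<\<delta>"
      hence "(c+(-t))\<^sup>2 \<ge> 4*\<gamma>*\<mu>" using d(2)[of "-t"] by auto
      thus "phi \<gamma> \<mu> (c-t) - phi \<gamma> \<mu> c = -((t\<^sup>2 - 2*c*t)/(4*\<gamma>))" using P2 B by simp
    qed
    ultimately have w: "w = c/2" by simp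
    have pc: "phi \<gamma> \<mu> c = \<mu> - c\<^sup>2/(4*\<gamma>)" using phi1[OF g(1)] B by simp
    have "(1/\<gamma>) * (w\<^sup>2/1) + \<mu>*1 - c*w/\<gamma> = phi \<gamma> \<mu> c"
      unfolding pc w using g by (simp add: field_simps power2_eq_square)
    thus ?thesis by (intro exI[of _ 1]) (simp add: w)
  next
    case C
    have pc: "phi \<gamma> \<mu> c = 0" using phi0[OF g(1)] C by simp
    have mu: "\<mu> = c\<^sup>2 / (4*\<gamma>)" using C g by (simp add: field_simps)
    consider (pos) "c > 0" | (neg) "c < 0" | (zero) "c = 0" by linarith
    then have wz: "\<exists>z. 0 \<le> z \<and> z \<le> 1 \<and> w = c*z/2"
    proof cases
      case pos
      have "w \<ge> 0"
      proof (rule L0[of c])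
        show "c > 0" by fact
        fix t :: real assume "0<t" "t<c"
        hence "(c-t)\<^sup>2 \<le> c\<^sup>2" by (intro power_mono) auto
        hence "(c-t)\<^sup>2 \<le> 4*\<gamma>*\<mu>" using C by simp
        thus "phi \<gamma> \<mu> (c-t) = phi \<gamma> \<mu> c" using phi0[OF g(1)] pc by simp
      qed
      moreover have "w \<le> c/2"
      proof (rule U1[of 1])
        fix t :: real assume "0<t" "t<1"
        hence "c\<^sup>2 \<le> (c+t)\<^sup>2" using pos by (intro power_mono) auto
        hence "(c+t)\<^sup>2 \<ge> 4*\<gamma>*\<mu>" using C by simp
        thus "phi \<gamma> \<mu> (c+t) - phi \<gamma> \<mu> c = -((2*c*t+t\<^sup>2)/(4*\<gamma>))" using P1 C by simp
      qed simp
      ultimately show ?thesis using pos by (intro exI[of _ "2*w/c"]) (simp add: field_simps)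
    next
      case neg
      have "w \<le> 0"
      proof (rule U0[of "-c"])
        show "-c > 0" using neg by simp
        fix t :: real assume "0<t" "t< -c"
        hence "(-(c+t))\<^sup>2 \<le> (-c)\<^sup>2" by (intro power_mono) auto
        hence "(c+t)\<^sup>2 \<le> 4*\<gamma>*\<mu>" using C by (metis power2_minus)
        thus "phi \<gamma> \<mu> (c+t) = phi \<gamma> \<mu> c" using phi0[OF g(1)] pc by simp
      qed
      moreover have "w \<ge> c/2"
      proof (rule L1[of 1])
        fix t :: real assume "0<t" "t<1"
        hence "(-c)\<^sup>2 \<le> (-(c-t))\<^sup>2" using neg by (intro power_mono) auto
        hence "(c-t)\<^sup>2 \<ge> 4*\<gamma>*\<mu>" using C by (metis power2_minus)
        thus "phi \<gamma> \<mu> (c-t) - phi \<gamma> \<mu> c = -((t\<^sup>2 - 2*c*t)/(4*\<gamma>))" using P2 C by simp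
      qed simp
      ultimately show ?thesis using neg by (intro exI[of _ "2*w/c"]) (simp add: field_simps)
    next
      case zero
      have m0: "\<mu> = 0" using C zero g by auto
      have "w \<le> c/2"
      proof (rule U1[of 1])
        fix t :: real assume "0<t" "t<1"
        thus "phi \<gamma> \<mu> (c+t) - phi \<gamma> \<mu> c = -((2*c*t+t\<^sup>2)/(4*\<gamma>))" using P1[of t] m0 zero by simp
      qed simp
      moreover have "w \<ge> c/2"
      proof (rule L1[of 1])
        fix t :: real assume "0<t" "t<1"
        thus "phi \<gamma> \<mu> (c-t) - phi \<gamma> \<mu> c = -((t\<^sup>2 - 2*c*t)/(4*\<gamma>))" using P2[of t] m0 zero by simp
      qed simp
      ultimately show ?thesis using zero by (intro exI[of _ 0]) simp
    qed
    then obtain z where z: "0 \<le> z" "z \<le> 1" "w = c*z/2" by blast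
    show ?thesis
    proof (cases "z = 0")
      case True thus ?thesis using z pc by (intro exI[of _ z]) simp
    next
      case False
      have "(1/\<gamma>) * (w\<^sup>2/z) + \<mu>*z - c*w/\<gamma> = 0"
        using False g unfolding mu z(3) by (simp add: field_simps power2_eq_square)
      thus ?thesis using z(1,2) False pc by (intro exI[of _ z]) (simp add: z(3))
    qed
  qed
qed




lemma inv_props:
  fixes B :: "real^'n^'n"
  assumes "invertible B"
  shows "B ** matrix_inv B = mat 1 \<and> matrix_inv B ** B = mat 1"
  using assms unfolding invertible_def matrix_inv_def by (rule someI_ex)

lemma Msym:
  fixes B :: "real^'n^'n"
  assumes "invertible B" "transpose B = B"
  shows "transpose (matrix_inv B) = matrix_inv B"
proof -
  let ?M = "matrix_inv B"
  have "transpose ?M ** B = mat 1"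
    using inv_props[OF assms(1)] assms(2) by (metis matrix_transpose_mul transpose_mat)
  note tm = this
  have "transpose ?M = transpose ?M ** (B ** ?M)" using inv_props[OF assms(1)] by simp
  also have "\<dots> = (transpose ?M ** B) ** ?M" by (simp add: matrix_mul_assoc)
  also have "\<dots> = ?M" using tm by simp
  finally show ?thesis .
qed

lemma dotT: "(transpose A *v u) \<bullet> w = u \<bullet> (A *v (w::real^_))"
  by (simp add: dot_lmul_matrix)

lemma dot_sym: "transpose M = M \<Longrightarrow> u \<bullet> (M *v w) = (M *v u) \<bullet> (w::real^_)"
  by (metis dotT)

lemma gap:
  fixes A :: "real^'n^'m" and y :: "real^'m" and p x x0 v :: "real^'n"
  assumes g: "\<gamma> \<noteq> 0" and v: "v = transpose A *v y - (1 / (2 * \<gamma>)) *\<^sub>R p"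
    and Bx: "transpose A *v (A *v x0) = v"
  shows "(norm (y - A *v x))\<^sup>2 + (p \<bullet> x)/\<gamma> - (norm y)\<^sup>2 + v \<bullet> x0 = (norm (A *v (x - x0)))\<^sup>2"
proof -
  define u where "u = A *v x"
  define u0 where "u0 = A *v x0"
  have p: "p = (2*\<gamma>) *\<^sub>R (transpose A *v y - v)" using v g by simp
  have e1: "(norm (y - A *v x))\<^sup>2 = y \<bullet> y - 2 * (y \<bullet> u) + u \<bullet> u"
    unfolding power2_norm_eq_inner u_def by (simp add: inner_diff inner_commute)
  have e2: "p \<bullet> x = 2*\<gamma> * (y \<bullet> u - u0 \<bullet> u)"
    unfolding p u_def u0_def using Bx[symmetric]
    by (simp add: inner_diff_left dot_lmul_matrix)
  have e3: "v \<bullet> x0 = u0 \<bullet> u0" using Bx[symmetric] unfolding u0_def by (simp add: dot_lmul_matrix)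
  have e4: "(norm (A *v (x - x0)))\<^sup>2 = u \<bullet> u - 2 * (u \<bullet> u0) + u0 \<bullet> u0"
    unfolding power2_norm_eq_inner u_def u0_def
    by (simp add: matrix_vector_mult_diff_distrib inner_diff inner_commute)
  have e5: "(norm y)\<^sup>2 = y \<bullet> y" by (simp add: power2_norm_eq_inner)
  show ?thesis using g
    by (simp only: e1 e2 e3 e4 e5) (simp add: inner_commute field_simps)
qed

lemma axis_mv: "((M::real^'n^'n) *v axis i s) $ j = M $ j $ i * s"
  by (simp add: matrix_vector_mult_def axis_def if_distrib cong: if_cong)

lemma sum_upd:
  fixes f :: "real \<Rightarrow> real" and p :: "real^'n"
  shows "(\<Sum>j\<in>UNIV. f ((p + axis i t) $ j)) = (\<Sum>j\<in>UNIV. f (p $ j)) - f (p $ i) + f (p $ i + t)"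
proof -
  have "(\<Sum>j\<in>UNIV. f ((p + axis i t) $ j)) = f ((p + axis i t) $ i) + (\<Sum>j\<in>UNIV-{i}. f ((p + axis i t) $ j))"
    by (subst sum.remove[of UNIV i]) auto
  also have "(\<Sum>j\<in>UNIV-{i}. f ((p + axis i t) $ j)) = (\<Sum>j\<in>UNIV-{i}. f (p $ j))"
    by (rule sum.cong) (auto simp: axis_def)
  also have "(\<Sum>j\<in>UNIV. f (p $ j)) = f (p $ i) + (\<Sum>j\<in>UNIV-{i}. f (p $ j))"
    by (subst sum.remove[of UNIV i]) auto
  ultimately show ?thesis by simp
qed




lemma pw:
  fixes \<gamma> \<mu> c x z :: real
  assumes "\<gamma> > 0" "0 \<le> z" "z \<le> 1" "z = 0 \<longrightarrow> x = 0"
  shows "phi \<gamma> \<mu> c \<le> (1/\<gamma>) * (if z = 0 then 0 else x\<^sup>2/z) + \<mu>*z - c*x/\<gamma>"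
proof (cases "z = 0")
  case True thus ?thesis using assms by (simp add: phi_def)
next
  case False
  hence zp: "z > 0" using assms by simp
  have "phi \<gamma> \<mu> c \<le> z * (\<mu> - c\<^sup>2/(4*\<gamma>))"
  proof (cases "\<mu> - c\<^sup>2/(4*\<gamma>) \<ge> 0")
    case True thus ?thesis using zp by (simp add: phi_def)
  next
    case False
    hence "z * (\<mu> - c\<^sup>2/(4*\<gamma>)) \<ge> 1 * (\<mu> - c\<^sup>2/(4*\<gamma>))"
      using assms by (intro mult_right_mono_neg) auto
    thus ?thesis by (simp add: phi_def)
  qed
  also have "\<dots> \<le> (1/\<gamma>) * (x\<^sup>2/z) + \<mu>*z - c*x/\<gamma>"
  proof -
    have "(1/\<gamma>) * (x\<^sup>2/z) + \<mu>*z - c*x/\<gamma> - z * (\<mu> - c\<^sup>2/(4*\<gamma>)) = (x - c*z/2)\<^sup>2 / (\<gamma>*z)"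
      using zp assms(1) by (simp add: field_simps power2_eq_square)
    moreover have "(x - c*z/2)\<^sup>2 / (\<gamma>*z) \<ge> 0" using zp assms(1) by simp
    ultimately show ?thesis by linarith
  qed
  finally show ?thesis using False by simp
qed

lemma obj_finite:
  assumes "\<forall>i. z$i = 0 \<longrightarrow> x$i = 0"
  shows "CR_obj A y \<gamma> \<mu> x z = ereal ((norm (y - A *v x))\<^sup>2
     + (1/\<gamma>) * (\<Sum>i\<in>UNIV. (if z$i = 0 then 0 else (x$i)\<^sup>2/(z$i))) + \<mu> * (\<Sum>i\<in>UNIV. z$i))"
proof -
  have "persp (x$i) (z$i) = ereal (if z$i = 0 then 0 else (x$i)\<^sup>2/(z$i))" for i
    using assms by (simp add: persp_def)
  hence "(\<Sum>i\<in>UNIV. persp (x$i) (z$i)) = ereal (\<Sum>i\<in>UNIV. (if z$i = 0 then 0 else (x$i)\<^sup>2/(z$i)))"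
    by simp
  thus ?thesis unfolding CR_obj_def by simp
qed

lemma obj_inf:
  assumes "z$i = 0" "x$i \<noteq> 0" "\<gamma> > 0"
  shows "CR_obj A y \<gamma> \<mu> x z = \<infinity>"
proof -
  have "persp (x$i) (z$i) = \<infinity>" using assms by (simp add: persp_def)
  hence "(\<Sum>i\<in>UNIV. persp (x$i) (z$i)) = \<infinity>" by (auto simp: sum_Pinfty)
  thus ?thesis unfolding CR_obj_def using assms(3) by simp
qed

lemma sum_le_one:
  fixes f :: "'n::finite \<Rightarrow> real"
  assumes "\<forall>j. f j \<le> 0"
  shows "(\<Sum>j\<in>UNIV. f j) \<le> f i"
proof -
  have "(\<Sum>j\<in>UNIV. f j) = f i + (\<Sum>j\<in>UNIV-{i}. f j)" by (subst sum.remove[of UNIV i]) auto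
  moreover have "(\<Sum>j\<in>UNIV-{i}. f j) \<le> 0" using assms by (intro sum_nonpos) auto
  ultimately show ?thesis by simp
qed




lemma cont_mv [continuous_intros]:
  fixes f :: "'a::topological_space \<Rightarrow> real^'n"
  shows "continuous_on S f \<Longrightarrow> continuous_on S (\<lambda>x. (M::real^'n^'m) *v f x)"
  using continuous_on_compose[of S f "(*v) M"] matrix_vector_mult_linear_continuous_on
  by (auto simp: o_def)

theorem mainTheorem3:
  fixes A :: "real^'n^'m" and y :: "real^'m" and \<gamma> \<mu> :: real
  assumes "invertible (transpose A ** A)" and "\<gamma> > 0" and "\<mu> \<ge> 0"
  shows "(\<exists>p. ereal (CR_dual A y \<gamma> \<mu> p) = zeta_CR A y \<gamma> \<mu>)
       \<and> (\<forall>p. ereal (CR_dual A y \<gamma> \<mu> p) \<le> zeta_CR A y \<gamma> \<mu>)"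
proof -
  note g = assms(2) assms(3)
  define B where "B = transpose A ** A"
  define M where "M = matrix_inv B"
  have invB: "invertible B" using assms(1) by (simp add: B_def)
  have BM: "B ** M = mat 1" "M ** B = mat 1" using inv_props[OF invB] by (auto simp: M_def)
  have Bsym: "transpose B = B" by (simp add: B_def matrix_transpose_mul)
  have Msy: "transpose M = M" unfolding M_def by (rule Msym[OF invB Bsym])
  define V where "V p = transpose A *v y - (1/(2*\<gamma>)) *\<^sub>R p" for p
  define D where "D p = CR_dual A y \<gamma> \<mu> p" for p
  have Deq: "D p = (norm y)\<^sup>2 - V p \<bullet> (M *v V p) + (\<Sum>i\<in>UNIV. phi \<gamma> \<mu> (p$i))" for p
    unfolding D_def CR_dual_def Let_def V_def M_def B_def phi_def by simp
  have BMv: "transpose A *v (A *v (M *v w)) = w" for w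
    by (simp add: matrix_vector_mul_assoc matrix_mul_assoc B_def[symmetric] BM)
  have psd: "V p \<bullet> (M *v V p) \<ge> 0" for p
  proof -
    have "V p \<bullet> (M *v V p) = (transpose A *v (A *v (M *v V p))) \<bullet> (M *v V p)" by (simp only: BMv)
    also have "\<dots> = (A *v (M *v V p)) \<bullet> (A *v (M *v V p))" by (rule dotT)
    finally show ?thesis by simp
  qed
  have WD: "ereal (D p) \<le> CR_obj A y \<gamma> \<mu> x z" if z: "\<forall>i. 0 \<le> z$i \<and> z$i \<le> 1" for p x z
  proof (cases "\<exists>i. z$i = 0 \<and> x$i \<noteq> 0")
    case True
    then obtain i where "z$i = 0" "x$i \<noteq> 0" by blast
    hence "CR_obj A y \<gamma> \<mu> x z = \<infinity>" using obj_inf g by blast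
    thus ?thesis by simp
  next
    case False
    hence ok: "\<forall>i. z$i = 0 \<longrightarrow> x$i = 0" by blast
    define pr where "pr i = (if z$i = 0 then 0 else (x$i)\<^sup>2/(z$i))" for i
    have "(\<Sum>i\<in>UNIV. phi \<gamma> \<mu> (p$i)) \<le> (\<Sum>i\<in>UNIV. (1/\<gamma>) * pr i + \<mu>*z$i - p$i*x$i/\<gamma>)"
      unfolding pr_def using z ok g by (intro sum_mono pw) auto
    also have "\<dots> = (1/\<gamma>) * (\<Sum>i\<in>UNIV. pr i) + \<mu> * (\<Sum>i\<in>UNIV. z$i) - (p \<bullet> x)/\<gamma>"
      by (simp add: sum.distrib sum_subtractf sum_distrib_left inner_vec_def sum_divide_distrib)
    finally have s1: "(\<Sum>i\<in>UNIV. phi \<gamma> \<mu> (p$i)) \<le> (1/\<gamma>) * (\<Sum>i\<in>UNIV. pr i) + \<mu> * (\<Sum>i\<in>UNIV. z$i) - (p \<bullet> x)/\<gamma>" .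
    have s2: "(norm (y - A *v x))\<^sup>2 + (p \<bullet> x)/\<gamma> - (norm y)\<^sup>2 + V p \<bullet> (M *v V p) \<ge> 0"
      using gap[of \<gamma> "V p" A y p "M *v V p" x] g BMv V_def by simp
    have "D p \<le> (norm (y - A *v x))\<^sup>2 + (1/\<gamma>) * (\<Sum>i\<in>UNIV. pr i) + \<mu> * (\<Sum>i\<in>UNIV. z$i)"
      using Deq[of p] s1 s2 by linarith
    thus ?thesis by (subst obj_finite[OF ok]) (simp add: pr_def)
  qed
  have bound: "D p \<le> (norm y)\<^sup>2 + \<mu> - (p$i)\<^sup>2/(4*\<gamma>)" for p i
  proof -
    have "(\<Sum>j\<in>UNIV. phi \<gamma> \<mu> (p$j)) \<le> phi \<gamma> \<mu> (p$i)"
      by (rule sum_le_one) (simp add: phi_def)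
    also have "\<dots> \<le> \<mu> - (p$i)\<^sup>2/(4*\<gamma>)" by (simp add: phi_def)
    finally show ?thesis using Deq[of p] psd[of p] by linarith
  qed
  have cont: "continuous_on UNIV D"
  proof -
    have "continuous_on UNIV (\<lambda>p. (norm y)\<^sup>2 - V p \<bullet> (M *v V p) + (\<Sum>i\<in>UNIV. phi \<gamma> \<mu> (p$i)))"
      unfolding V_def phi_def using g by (intro continuous_intros) auto
    moreover have "D = (\<lambda>p. (norm y)\<^sup>2 - V p \<bullet> (M *v V p) + (\<Sum>i\<in>UNIV. phi \<gamma> \<mu> (p$i)))"
      using Deq by (intro ext) simp
    ultimately show ?thesis by simp
  qed
  define S0 where "S0 = (norm y)\<^sup>2 + \<mu> - D 0"
  define R where "R = \<bar>4*\<gamma>*S0\<bar> + 1"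
  define box where "box = cbox ((\<chi> i. -R)::real^'n) (\<chi> i. R)"
  have R1: "R \<ge> 1" by (simp add: R_def)
  have zb: "0 \<in> box" using R1 by (simp add: box_def mem_box_cart)
  have "compact box" "box \<noteq> {}" using zb by (auto simp: box_def)
  moreover have "continuous_on box D" using cont by (rule continuous_on_subset) simp
  ultimately obtain p0 where p0: "p0 \<in> box" "\<forall>q\<in>box. D q \<le> D p0"
    using continuous_attains_sup[of box D] by blast
  have opt: "D q \<le> D p0" for q
  proof (cases "q \<in> box")
    case True thus ?thesis using p0 by blast
  next
    case False
    hence "\<not>(\<forall>i. -R \<le> q$i \<and> q$i \<le> R)" by (simp add: box_def mem_box_cart)
    then obtain i where "\<not>(-R \<le> q$i \<and> q$i \<le> R)" by blast
    hence qi: "\<bar>q$i\<bar> > R" by linarith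
    hence "R * R < \<bar>q$i\<bar> * \<bar>q$i\<bar>" using R1 by (intro mult_strict_mono) auto
    moreover have "R * 1 \<le> R * R" using R1 by (intro mult_left_mono) auto
    moreover have "\<bar>q$i\<bar> * \<bar>q$i\<bar> = (q$i)\<^sup>2" by (simp add: power2_eq_square)
    ultimately have "R < (q$i)\<^sup>2" by linarith
    hence "4*\<gamma>*S0 < (q$i)\<^sup>2" unfolding R_def by linarith
    hence "S0 < (q$i)\<^sup>2/(4*\<gamma>)" using g by (simp add: field_simps)
    hence "D q < D 0" using bound[of q i] unfolding S0_def by linarith
    also have "D 0 \<le> D p0" using p0 R1 by (auto simp: box_def mem_box_cart)
    finally show ?thesis by simp
  qed
  define x0 where "x0 = M *v V p0"
  have coordH: "t * (x0$i)/\<gamma> - ((M$i$i)/(4*\<gamma>\<^sup>2)) * t\<^sup>2 + phi \<gamma> \<mu> (p0$i + t) - phi \<gamma> \<mu> (p0$i) \<le> 0" for i t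
  proof -
    define s where "s = t/(2*\<gamma>)"
    define d where "d = axis i s"
    define v where "v = V p0"
    have Vq: "V (p0 + axis i t) = v - d"
    proof -
      have "(1/(2*\<gamma>)) *\<^sub>R axis i t = d" by (simp add: d_def s_def axis_def vec_eq_iff)
      thus ?thesis unfolding V_def v_def by (simp add: scaleR_add_right algebra_simps)
    qed
    have q1: "d \<bullet> (M *v v) = s * (x0$i)" by (simp add: d_def inner_axis' x0_def v_def)
    have q2: "v \<bullet> (M *v d) = s * (x0$i)" using dot_sym[OF Msy, of v d] by (simp add: d_def inner_axis x0_def v_def)
    have q3: "d \<bullet> (M *v d) = s * s * (M$i$i)" by (simp add: d_def inner_axis' axis_mv)
    have "(v - d) \<bullet> (M *v (v - d)) = v \<bullet> (M *v v) - v \<bullet> (M *v d) - d \<bullet> (M *v v) + d \<bullet> (M *v d)"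
      by (simp add: matrix_vector_mult_diff_distrib inner_diff)
    hence qq: "V (p0 + axis i t) \<bullet> (M *v V (p0 + axis i t)) = v \<bullet> (M *v v) - 2 * s * (x0$i) + s * s * (M$i$i)"
      using q1 q2 q3 Vq by simp
    have "D (p0 + axis i t) - D p0 = 2 * s * (x0$i) - s * s * (M$i$i) + phi \<gamma> \<mu> (p0$i + t) - phi \<gamma> \<mu> (p0$i)"
      using Deq[of "p0 + axis i t"] Deq[of p0] qq sum_upd[of "phi \<gamma> \<mu>" p0 i t] unfolding v_def by simp
    moreover have "2 * s * (x0$i) = t * (x0$i)/\<gamma>" "s * s * (M$i$i) = ((M$i$i)/(4*\<gamma>\<^sup>2)) * t\<^sup>2"
      using g by (simp_all add: s_def field_simps power2_eq_square)
    ultimately show ?thesis using opt[of "p0 + axis i t"] by linarith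
  qed
  have "\<forall>i. \<exists>z. 0 \<le> z \<and> z \<le> 1 \<and> (z = 0 \<longrightarrow> (x0$i) = 0) \<and>
            (1/\<gamma>) * (if z = 0 then 0 else (x0$i)\<^sup>2/z) + \<mu>*z - (p0$i)*(x0$i)/\<gamma> = phi \<gamma> \<mu> (p0$i)"
    using coord[OF g coordH] by blast
  then obtain zf where zf: "\<And>i. 0 \<le> zf i \<and> zf i \<le> 1 \<and> (zf i = 0 \<longrightarrow> (x0$i) = 0) \<and>
            (1/\<gamma>) * (if zf i = 0 then 0 else (x0$i)\<^sup>2/zf i) + \<mu>*zf i - (p0$i)*(x0$i)/\<gamma> = phi \<gamma> \<mu> (p0$i)"
    by metis
  define z0 where "z0 = (\<chi> i. zf i)"
  have z0: "\<forall>i. 0 \<le> z0$i \<and> z0$i \<le> 1" "\<forall>i. z0$i = 0 \<longrightarrow> (x0$i) = 0" using zf by (auto simp: z0_def)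
  define pr where "pr i = (if z0$i = 0 then 0 else (x0$i)\<^sup>2/(z0$i))" for i
  have "(\<Sum>i\<in>UNIV. phi \<gamma> \<mu> (p0$i)) = (\<Sum>i\<in>UNIV. (1/\<gamma>) * pr i + \<mu>*z0$i - p0$i*(x0$i)/\<gamma>)"
  proof (rule sum.cong[OF refl])
    fix i
    show "phi \<gamma> \<mu> (p0$i) = (1/\<gamma>) * pr i + \<mu>*z0$i - p0$i*(x0$i)/\<gamma>"
      using zf[of i] unfolding pr_def z0_def vec_lambda_beta by linarith
  qed
  also have "\<dots> = (1/\<gamma>) * (\<Sum>i\<in>UNIV. pr i) + \<mu> * (\<Sum>i\<in>UNIV. z0$i) - (p0 \<bullet> x0)/\<gamma>"
    by (simp add: sum.distrib sum_subtractf sum_distrib_left inner_vec_def sum_divide_distrib)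
  finally have s1: "(\<Sum>i\<in>UNIV. phi \<gamma> \<mu> (p0$i)) = (1/\<gamma>) * (\<Sum>i\<in>UNIV. pr i) + \<mu> * (\<Sum>i\<in>UNIV. z0$i) - (p0 \<bullet> x0)/\<gamma>" .
  have s2: "(norm (y - A *v x0))\<^sup>2 + (p0 \<bullet> x0)/\<gamma> - (norm y)\<^sup>2 + V p0 \<bullet> (M *v V p0) = 0"
    using gap[of \<gamma> "V p0" A y p0 "M *v V p0" x0] g BMv V_def by (simp add: x0_def)
  have "D p0 = (norm (y - A *v x0))\<^sup>2 + (1/\<gamma>) * (\<Sum>i\<in>UNIV. pr i) + \<mu> * (\<Sum>i\<in>UNIV. z0$i)"
    using Deq[of p0] s1 s2 by linarith
  hence eqobj: "CR_obj A y \<gamma> \<mu> x0 z0 = ereal (D p0)"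
    by (subst obj_finite[OF z0(2)]) (simp add: pr_def)
  have lowb: "ereal (D p) \<le> zeta_CR A y \<gamma> \<mu>" for p
    unfolding zeta_CR_def by (rule INF_greatest) (use WD in auto)
  have "zeta_CR A y \<gamma> \<mu> \<le> CR_obj A y \<gamma> \<mu> x0 z0"
    unfolding zeta_CR_def by (rule INF_lower2[of "(x0, z0)"]) (use z0 in auto)
  hence "ereal (D p0) = zeta_CR A y \<gamma> \<mu>" using lowb[of p0] eqobj by simp
  thus ?thesis using lowb unfolding D_def by blast
qed


end
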